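(* Let $G$ be a graph with girth at least $5$ (in particular, any forest). Then $\gamma^{SLD}(G)=\gamma_2(G)$.
   Context: All graphs are finite, simple and undirected (not necessarily connected). For $u\in V$, $N(u)$ is the set of neighbours of $u$ and $N[u]=N(u)\cup\{u\}$. A code is a non-empty subset $C\subseteq V$; $I(C;u)=N[u]\cap C$. A code $C$ is self-locating-dominating if for every $u\in V\setminus C$ we have $I(C;u)\neq\emptyset$ and $\bigcap_{c\in I(C;u)}N[c]=\{u\}$; $\gamma^{SLD}(G)$ is the minimum size of such a code. A set $S\subseteq V$ is $2$-dominating if $|N[u]\cap S|\ge 2$ for every $u\in V\setminus S$; $\gamma_2(G)$ is the minimum size of a $2$-dominating set. The girth is the length of a shortest cycle; acyclic graphs have infinite girth. *)

theory Defs
  imports Main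
begin

definition simple_graph :: "'a set \<Rightarrow> ('a \<Rightarrow> 'a \<Rightarrow> bool) \<Rightarrow> bool" where
  "simple_graph V E \<longleftrightarrow> finite V \<and> (\<forall>u v. E u v \<longrightarrow> u \<in> V \<and> v \<in> V)
     \<and> (\<forall>u v. E u v \<longrightarrow> E v u) \<and> (\<forall>u. \<not> E u u)"

definition nbh :: "'a set \<Rightarrow> ('a \<Rightarrow> 'a \<Rightarrow> bool) \<Rightarrow> 'a \<Rightarrow> 'a set" where
  "nbh V E u = {v \<in> V. E u v}"

definition cnbh :: "'a set \<Rightarrow> ('a \<Rightarrow> 'a \<Rightarrow> bool) \<Rightarrow> 'a \<Rightarrow> 'a set" where
  "cnbh V E u = insert u (nbh V E u)"

definition I_set :: "'a set \<Rightarrow> ('a \<Rightarrow> 'a \<Rightarrow> bool) \<Rightarrow> 'a set \<Rightarrow> 'a \<Rightarrow> 'a set" where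
  "I_set V E C u = cnbh V E u \<inter> C"

definition is_SLD_code :: "'a set \<Rightarrow> ('a \<Rightarrow> 'a \<Rightarrow> bool) \<Rightarrow> 'a set \<Rightarrow> bool" where
  "is_SLD_code V E C \<longleftrightarrow> C \<subseteq> V \<and> C \<noteq> {} \<and>
     (\<forall>u \<in> V - C. I_set V E C u \<noteq> {} \<and> (\<Inter>c \<in> I_set V E C u. cnbh V E c) = {u})"

definition gamma_SLD :: "'a set \<Rightarrow> ('a \<Rightarrow> 'a \<Rightarrow> bool) \<Rightarrow> nat" where
  "gamma_SLD V E = Min {card C | C. is_SLD_code V E C}"

definition is_2dom :: "'a set \<Rightarrow> ('a \<Rightarrow> 'a \<Rightarrow> bool) \<Rightarrow> 'a set \<Rightarrow> bool" where
  "is_2dom V E S \<longleftrightarrow> S \<subseteq> V \<and> (\<forall>u \<in> V - S. card (cnbh V E u \<inter> S) \<ge> 2)"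

definition gamma_2 :: "'a set \<Rightarrow> ('a \<Rightarrow> 'a \<Rightarrow> bool) \<Rightarrow> nat" where
  "gamma_2 V E = Min {card S | S. is_2dom V E S}"

definition is_cycle :: "'a set \<Rightarrow> ('a \<Rightarrow> 'a \<Rightarrow> bool) \<Rightarrow> 'a list \<Rightarrow> bool" where
  "is_cycle V E xs \<longleftrightarrow> length xs \<ge> 3 \<and> distinct xs \<and> set xs \<subseteq> V \<and>
     (\<forall>i < length xs. E (xs ! i) (xs ! ((i + 1) mod length xs)))"

text \<open>Girth at least g (acyclic graphs have infinite girth, so they qualify).\<close>
definition girth_at_least :: "'a set \<Rightarrow> ('a \<Rightarrow> 'a \<Rightarrow> bool) \<Rightarrow> nat \<Rightarrow> bool" where
  "girth_at_least V E g \<longleftrightarrow> (\<forall>xs. is_cycle V E xs \<longrightarrow> length xs \<ge> g)"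

end

theory Submission
  imports Defs
begin

lemma all_less3: "(\<forall>i<(3::nat). P i) \<longleftrightarrow> P 0 \<and> P 1 \<and> P 2"
  by (auto simp: less_Suc_eq numeral_eq_Suc)

lemma all_less4: "(\<forall>i<(4::nat). P i) \<longleftrightarrow> P 0 \<and> P 1 \<and> P 2 \<and> P 3"
  by (auto simp: less_Suc_eq numeral_eq_Suc)

lemma no_tri:
  assumes g: "simple_graph V E" and gi: "girth_at_least V E 5"
    and e: "E a b" "E b c" "E c a" and d: "a \<noteq> b" "b \<noteq> c" "a \<noteq> c"
  shows False
proof -
  have L: "length [a,b,c] = 3" by simp
  have "is_cycle V E [a,b,c]"
    unfolding is_cycle_def L all_less3 using g e d
    by (simp add: simple_graph_def)
  thus False using gi unfolding girth_at_least_def by fastforce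
qed

lemma no_quad:
  assumes g: "simple_graph V E" and gi: "girth_at_least V E 5"
    and e: "E a b" "E b c" "E c d" "E d a" and d: "distinct [a,b,c,d]"
  shows False
proof -
  have L: "length [a,b,c,d] = 4" by simp
  have "is_cycle V E [a,b,c,d]"
    unfolding is_cycle_def L all_less4 using g e d
    by (simp add: simple_graph_def)
  thus False using gi unfolding girth_at_least_def by fastforce
qed

lemma two_elems: "finite A \<Longrightarrow> 2 \<le> card A \<Longrightarrow> \<exists>x y. x \<in> A \<and> y \<in> A \<and> x \<noteq> y"
proof -
  assume f: "finite A" and c: "2 \<le> card A"
  then have "A \<noteq> {}" by auto
  then obtain x where x: "x \<in> A" by blast
  have "card (A - {x}) = card A - 1" using x f by simp
  then have "card (A - {x}) \<noteq> 0" using c by simp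
  then have "A - {x} \<noteq> {}" by (metis card.empty)
  then obtain y where "y \<in> A - {x}" by blast
  thus ?thesis using x by blast
qed

lemma codes_eq:
  assumes g: "simple_graph V E" and ne: "V \<noteq> {}" and gi: "girth_at_least V E 5"
  shows "is_SLD_code V E C \<longleftrightarrow> is_2dom V E C"
proof
  have fin: "finite V" using g by (simp add: simple_graph_def)
  assume s: "is_SLD_code V E C"
  show "is_2dom V E C" unfolding is_2dom_def
  proof (intro conjI ballI)
    show "C \<subseteq> V" using s by (simp add: is_SLD_code_def)
    fix u assume u: "u \<in> V - C"
    have I1: "I_set V E C u \<noteq> {}" and I2: "(\<Inter>c \<in> I_set V E C u. cnbh V E c) = {u}"
      using s u by (auto simp: is_SLD_code_def)
    obtain c where c: "c \<in> I_set V E C u" using I1 by blast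
    have "I_set V E C u \<noteq> {c}"
    proof
      assume "I_set V E C u = {c}"
      with I2 have "cnbh V E c = {u}" by simp
      hence "c = u" by (auto simp: cnbh_def)
      with c u show False by (simp add: I_set_def)
    qed
    then obtain d where d: "d \<in> I_set V E C u" "d \<noteq> c" using c by blast
    have finI: "finite (cnbh V E u \<inter> C)" using fin by (simp add: cnbh_def nbh_def)
    have "{c,d} \<subseteq> cnbh V E u \<inter> C" using c d by (simp add: I_set_def)
    hence "card {c,d} \<le> card (cnbh V E u \<inter> C)" using finI card_mono by blast
    thus "2 \<le> card (cnbh V E u \<inter> C)" using d by simp
  qed
next
  have fin: "finite V" using g by (simp add: simple_graph_def)
  have sym: "\<And>x y. E x y \<Longrightarrow> E y x" and irr: "\<And>x. \<not> E x x"
    and inV: "\<And>x y. E x y \<Longrightarrow> x \<in> V \<and> y \<in> V" using g by (auto simp: simple_graph_def)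
  assume t: "is_2dom V E C"
  have CV: "C \<subseteq> V" using t by (simp add: is_2dom_def)
  show "is_SLD_code V E C" unfolding is_SLD_code_def
  proof (intro conjI ballI)
    show "C \<subseteq> V" by (rule CV)
    show "C \<noteq> {}"
    proof
      assume "C = {}"
      obtain v where "v \<in> V" using ne by blast
      with t \<open>C = {}\<close> show False by (simp add: is_2dom_def)
    qed
  next
    fix u assume u: "u \<in> V - C"
    have finI: "finite (cnbh V E u \<inter> C)" using fin by (simp add: cnbh_def nbh_def)
    have "2 \<le> card (cnbh V E u \<inter> C)" using t u by (simp add: is_2dom_def)
    then obtain c1 c2 where cc: "c1 \<in> cnbh V E u \<inter> C" "c2 \<in> cnbh V E u \<inter> C" "c1 \<noteq> c2"
      using two_elems[OF finI] by blast
    have e1: "E u c1" and e2: "E u c2" using cc u by (auto simp: cnbh_def nbh_def)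
    have n1: "c1 \<noteq> u" "c2 \<noteq> u" using cc u by auto
    show "I_set V E C u \<noteq> {}" using cc by (auto simp: I_set_def)
    show "(\<Inter>c \<in> I_set V E C u. cnbh V E c) = {u}"
    proof
      show "{u} \<subseteq> (\<Inter>c \<in> I_set V E C u. cnbh V E c)"
        using u sym irr by (auto simp: I_set_def cnbh_def nbh_def)
    next
      show "(\<Inter>c \<in> I_set V E C u. cnbh V E c) \<subseteq> {u}"
      proof
        fix w assume w: "w \<in> (\<Inter>c \<in> I_set V E C u. cnbh V E c)"
        have w1: "w = c1 \<or> E c1 w" and w2: "w = c2 \<or> E c2 w"
          using w cc by (auto simp: I_set_def cnbh_def nbh_def)
        show "w \<in> {u}"
        proof (rule ccontr)
          assume wu: "w \<notin> {u}"
          show False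
          proof (cases "w = c1")
            case True
            with w2 cc have "E c2 c1" by auto
            thus False using no_tri[OF g gi e1 sym[OF \<open>E c2 c1\<close>] sym[OF e2]] n1 cc(3) by auto
          next
            case False
            with w1 have a: "E c1 w" by simp
            show False
            proof (cases "w = c2")
              case True
              with a have "E c1 c2" by simp
              thus False using no_tri[OF g gi e1 \<open>E c1 c2\<close> sym[OF e2]] n1 cc(3) by auto
            next
              case False
              with w2 have b: "E c2 w" by simp
              show False using no_quad[OF g gi e1 a sym[OF b] sym[OF e2]] n1 cc(3) wu
                 \<open>w \<noteq> c1\<close> False by auto
            qed
          qed
        qed
      qed
    qed
  qed
qed

theorem mainTheorem11:
  fixes V :: "'a set" and E :: "'a \<Rightarrow> 'a \<Rightarrow> bool"
  assumes "simple_graph V E"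
    and "V \<noteq> {}"
    and "girth_at_least V E 5"
  shows "gamma_SLD V E = gamma_2 V E"
  unfolding gamma_SLD_def gamma_2_def using codes_eq[OF assms] by simp

end
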